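(* Let $G$ be a finite abelian group of order coprime to $p$ and $\bar a=(a_1,\ldots,a_t)\in(\mathcal F(G,K))^t$, and let $\mathcal H\subseteq G^\vee$ be the set of $\bar a$-harmonic characters (a set stable under $g^\vee\mapsto(g^\vee)^q$). (a) There is a bijection between the set of traces $\mathrm{Tr}(g^\vee)\in\mathcal F(G,K)$, $g^\vee\in\mathcal H$, and the set of orbits of the cyclic group generated by $D_q:g^\vee\mapsto(g^\vee)^q$ acting on $\mathcal H$. (b) If $g_1^\vee,\ldots,g_m^\vee$ is a set of representatives of these orbits, then $$\ker(\Delta_{\bar a})=\bigoplus_{i=1}^m\big(\mathrm{Tr}(g_i^\vee)\big)\subseteq\mathcal F(G,K)$$ is a decomposition into an orthogonal direct sum of convolution ideals, where $(h)$ denotes the convolution ideal of $\mathcal F(G,K)$ generated by $h$. (c) For every $g^\vee\in G^\vee$ one has $$g^\vee=\frac1{|G|}\sum_{g\in G}g^\vee(-g)\,h_g,\qquad h_g(x)=\mathrm{Tr}(g^\vee)(g+x).$$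
   Context: $K=\mathrm{GF}(q)$, $q=p^r$, $\bar K$ an algebraic closure. $G$ is written additively; $\mathcal F(G,F)$ is the ring of functions $G\to F$ with convolution $(f*a)(g)=\sum_hf(h)a(g-h)$; $\Delta_af=f*a$, $\ker(\Delta_{\bar a})=\{f\in\mathcal F(G,K):f*a_j=0\ \forall j\}$. $G^\vee$ is the group of homomorphisms $G\to\bar K^\times$; $g^\vee$ is $\bar a$-harmonic if $g^\vee*a_j=0$ for all $j$. For $f\in\mathcal F(G,\bar K)$, let $\mathrm{GF}(q^{r(f)})$ be the smallest subfield of $\bar K$ containing $K$ and $f(G)$, and $\mathrm{Tr}(f)=f+f^q+\cdots+f^{q^{r(f)-1}}$ (pointwise powers). Orthogonality refers to $\langle f_1,f_2\rangle_1=\frac1{|G|}\sum_gf_1(g)f_2(-g)$. *)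

theory Defs
  imports "HOL-Algebra.Algebraic_Closure_Type" "HOL-Library.Cardinality"
begin

text \<open>K = 'k (a finite field, q = CARD('k)), the algebraic closure is 'k alg_closure,
  G = 'g (finite abelian group written additively).\<close>

definition conv :: "('g::{ab_group_add,finite} \<Rightarrow> 'f::comm_ring_1) \<Rightarrow> ('g \<Rightarrow> 'f) \<Rightarrow> 'g \<Rightarrow> 'f" where
  "conv f a = (\<lambda>g. \<Sum>h\<in>UNIV. f h * a (g - h))"

definition ker_Delta :: "nat \<Rightarrow> (nat \<Rightarrow> 'g::{ab_group_add,finite} \<Rightarrow> 'k::field) \<Rightarrow> ('g \<Rightarrow> 'k) set" where
  "ker_Delta t a = {f. \<forall>j<t. conv f (a j) = (\<lambda>_. 0)}"

definition dual_group :: "('g::{ab_group_add,finite} \<Rightarrow> 'k::field alg_closure) set" where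
  "dual_group = {\<chi>. (\<forall>x y. \<chi> (x + y) = \<chi> x * \<chi> y) \<and> (\<forall>x. \<chi> x \<noteq> 0)}"

definition harmonic :: "nat \<Rightarrow> (nat \<Rightarrow> 'g::{ab_group_add,finite} \<Rightarrow> 'k::field) \<Rightarrow> ('g \<Rightarrow> 'k alg_closure) \<Rightarrow> bool" where
  "harmonic t a \<chi> \<longleftrightarrow> (\<forall>j<t. conv \<chi> (\<lambda>x. to_ac (a j x)) = (\<lambda>_. 0))"

definition harmonic_chars :: "nat \<Rightarrow> (nat \<Rightarrow> 'g::{ab_group_add,finite} \<Rightarrow> 'k::field) \<Rightarrow> ('g \<Rightarrow> 'k alg_closure) set" where
  "harmonic_chars t a = {\<chi> \<in> dual_group. harmonic t a \<chi>}"

definition Dq :: "('g \<Rightarrow> 'k::{field,finite} alg_closure) \<Rightarrow> ('g \<Rightarrow> 'k alg_closure)" where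
  "Dq f = (\<lambda>x. f x ^ CARD('k))"

text \<open>r(f): GF(q^{r(f)}) is the smallest subfield of Kbar containing K and f(G).
  The subfield GF(q^n) of Kbar is exactly the set of y with y^(q^n) = y, so r(f) is the
  least n \<ge> 1 with f(G) contained in it.\<close>
definition rdeg :: "('g::finite \<Rightarrow> 'k::{field,finite} alg_closure) \<Rightarrow> nat" where
  "rdeg f = (LEAST n. n \<ge> 1 \<and> (\<forall>x. f x ^ (CARD('k) ^ n) = f x))"

definition Tr :: "('g::finite \<Rightarrow> 'k::{field,finite} alg_closure) \<Rightarrow> ('g \<Rightarrow> 'k alg_closure)" where
  "Tr f = (\<lambda>x. \<Sum>i<rdeg f. f x ^ (CARD('k) ^ i))"

text \<open>The trace regarded as a K-valued function (meaningful when its values lie in K).\<close>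
definition TrK :: "('g::finite \<Rightarrow> 'k::{field,finite} alg_closure) \<Rightarrow> ('g \<Rightarrow> 'k)" where
  "TrK f = (\<lambda>x. of_ac (Tr f x))"

definition Dq_orbit :: "('g \<Rightarrow> 'k::{field,finite} alg_closure) \<Rightarrow> ('g \<Rightarrow> 'k alg_closure) set" where
  "Dq_orbit f = {(Dq ^^ n) f | n. True}"

text \<open>Convolution ideal of F(G,K) generated by h (the ring is commutative with unit).\<close>
definition conv_ideal :: "('g::{ab_group_add,finite} \<Rightarrow> 'k::field) \<Rightarrow> ('g \<Rightarrow> 'k) set" where
  "conv_ideal h = {conv h u | u. True}"

definition ip1 :: "('g::{ab_group_add,finite} \<Rightarrow> 'k::field) \<Rightarrow> ('g \<Rightarrow> 'k) \<Rightarrow> 'k" where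
  "ip1 f1 f2 = (\<Sum>g\<in>UNIV. f1 g * f2 (- g)) / of_nat CARD('g)"

end

theory Submission
  imports Defs "HOL-Number_Theory.Residues"
begin

lemma prime_CHAR_fin: "prime CHAR('k::{field,finite})"
  by (rule prime_CHAR_semidom) (rule finite_imp_CHAR_pos, simp)

lemma of_nat_mod_CHAR: "(of_nat (n mod CHAR('k)) :: 'k::{field,finite}) = of_nat n"
  by (simp add: of_nat_eq_iff_cong_CHAR cong_def)

definition addsub :: "'k::{field,finite} set \<Rightarrow> bool" where
  "addsub B \<longleftrightarrow> 0 \<in> B \<and> (\<forall>x\<in>B. \<forall>y\<in>B. x + y \<in> B)"

lemma addsub_of_nat_mult: "addsub B \<Longrightarrow> x \<in> B \<Longrightarrow> of_nat n * x \<in> B"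
  by (induction n) (auto simp: addsub_def algebra_simps)

lemma addsub_neg: "addsub B \<Longrightarrow> x \<in> B \<Longrightarrow> (-x :: 'k::{field,finite}) \<in> B"
proof -
  assume B: "addsub B" and x: "x \<in> B"
  let ?p = "CHAR('k)"
  have p: "?p > 0" using prime_CHAR_fin[where 'k='k] prime_gt_0_nat by blast
  have "of_nat (?p - 1) * x + x = of_nat ?p * x"
    using p by (simp add: algebra_simps of_nat_diff)
  hence "x + of_nat (?p - 1) * x = 0" by (simp add: add.commute)
  hence "-x = of_nat (?p - 1) * x" by (rule add.inverse_unique)
  thus ?thesis using addsub_of_nat_mult[OF B x] by simp
qed

lemma addsub_step:
  fixes B :: "'k::{field,finite} set"
  assumes B: "addsub B" and x: "x \<notin> B"
  defines "B' \<equiv> (\<lambda>(b,k). b + of_nat k * x) ` (B \<times> {..<CHAR('k)})"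
  shows "addsub B'" "x \<in> B'" "B \<subseteq> B'" "card B' = CHAR('k) * card B"
proof -
  let ?p = "CHAR('k)"
  have pr: "prime ?p" by (rule prime_CHAR_fin)
  hence p1: "?p > 1" using prime_gt_1_nat by blast
  have "x = (\<lambda>(b,k). b + of_nat k * x) (0, 1)" by simp
  moreover have "(0::'k, 1::nat) \<in> B \<times> {..<CHAR('k)}" using p1 B by (auto simp: addsub_def)
  ultimately show "x \<in> B'" unfolding B'_def by (rule image_eqI)
  show sub: "B \<subseteq> B'"
  proof
    fix b assume b: "b \<in> B"
    have "b = (\<lambda>(b,k). b + of_nat k * x) (b, 0)" by simp
    moreover have "(b, 0::nat) \<in> B \<times> {..<CHAR('k)}" using p1 b by auto
    ultimately show "b \<in> B'" unfolding B'_def by (rule image_eqI)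
  qed
  show "addsub B'"
    unfolding addsub_def
  proof (intro conjI ballI)
    show "0 \<in> B'" using sub B by (auto simp: addsub_def)
    fix y z assume "y \<in> B'" "z \<in> B'"
    then obtain b1 k1 b2 k2 where y: "y = b1 + of_nat k1 * x" "b1 \<in> B" and
      z: "z = b2 + of_nat k2 * x" "b2 \<in> B" unfolding B'_def by auto
    have "y + z = (b1 + b2) + of_nat ((k1 + k2) mod ?p) * x"
      by (simp add: y z of_nat_mod_CHAR algebra_simps)
    moreover have "b1 + b2 \<in> B" using B y z by (auto simp: addsub_def)
    moreover have "(k1 + k2) mod ?p < ?p" using p1 by simp
    ultimately show "y + z \<in> B'" unfolding B'_def by (auto simp: image_iff)
  qed
  have inj: "inj_on (\<lambda>(b,k). b + of_nat k * x) (B \<times> {..<?p})"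
  proof -
    have main: "b = b' \<and> k = k'" if eq: "b + of_nat k * x = b' + of_nat k' * x"
      and bb: "b \<in> B" "b' \<in> B" and kk: "k < ?p" "k' < ?p" "k' \<le> k" for b b' k k'
    proof (cases "k = k'")
      case True thus ?thesis using eq by simp
    next
      case False
      define d where "d = k - k'"
      have d: "0 < d" "d < ?p" using False kk unfolding d_def by auto
      have "of_nat d * x = b' - b"
        using eq kk unfolding d_def by (simp add: of_nat_diff algebra_simps)
      have cop: "coprime d ?p"
        using d pr proof -
        have "\<not> ?p dvd d" using d by (auto dest: dvd_imp_le)
        thus ?thesis using pr prime_imp_coprime coprime_commute by blast
      qed
      obtain u where u: "[d * u = 1] (mod ?p)"
        using cong_solve_nat[of d ?p] cop by auto
      have "(of_nat (d*u) :: 'k) = of_nat 1"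
        using u by (simp only: of_nat_eq_iff_cong_CHAR)
      hence "x = of_nat u * (of_nat d * x)" by (simp add: algebra_simps)
      also have "\<dots> = of_nat u * (b' + - b)" using \<open>of_nat d * x = b' - b\<close> by simp
      moreover have "b' + - b \<in> B"
      proof -
        have "-b \<in> B" by (rule addsub_neg[OF B bb(1)])
        thus ?thesis using B bb(2) unfolding addsub_def by blast
      qed
      ultimately have "x \<in> B" using addsub_of_nat_mult[OF B] by metis
      thus ?thesis using x by simp
    qed
    show ?thesis
    proof (rule inj_onI)
      fix u v assume uv: "u \<in> B \<times> {..<?p}" "v \<in> B \<times> {..<?p}"
        "(\<lambda>(b,k). b + of_nat k * x) u = (\<lambda>(b,k). b + of_nat k * x) v"
      obtain b k b' k' where u: "u = (b,k)" and v: "v = (b',k')" by (cases u, cases v) auto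
      show "u = v" using uv main[of b k b' k'] main[of b' k' b k] unfolding u v
        by (cases "k' \<le> k") auto
    qed
  qed
  show "card B' = ?p * card B"
    unfolding B'_def using card_image[OF inj] by (simp add: card_cartesian_product)
qed

lemma card_field_prime_power: "\<exists>e. CARD('k::{field,finite}) = CHAR('k) ^ e"
proof -
  have "\<exists>e. card B = CHAR('k) ^ e \<Longrightarrow> addsub B \<Longrightarrow> \<exists>e. CARD('k) = CHAR('k) ^ e"
    for B :: "'k set"
  proof (induction "card (UNIV - B)" arbitrary: B rule: less_induct)
    case less
    show ?case
    proof (cases "B = UNIV")
      case True thus ?thesis using less by simp
    next
      case False
      then obtain x where x: "x \<notin> B" by auto
      define B' where "B' = (\<lambda>(b,k). b + of_nat k * x) ` (B \<times> {..<CHAR('k)})"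
      note st = addsub_step[OF less(3) x, folded B'_def]
      obtain e where e: "card B = CHAR('k) ^ e" using less by auto
      have "card (UNIV - B') < card (UNIV - B)"
        using st x by (intro psubset_card_mono) auto
      moreover have "card B' = CHAR('k) ^ Suc e" using st e by simp
      ultimately show ?thesis using less st by blast
    qed
  qed
  moreover have "addsub {0::'k}" by (simp add: addsub_def)
  moreover have "\<exists>e. card {0::'k} = CHAR('k) ^ e" by (intro exI[of _ 0]) simp
  ultimately show ?thesis by blast
qed


lemma power_card_K: "(x::'k::{field,finite}) ^ CARD('k) = x"
proof (cases "x = 0")
  case False
  have "x * (\<Prod>y\<in>UNIV-{0}. x * y) = x * x ^ (card (UNIV :: 'k set) - 1) * \<Prod>(UNIV-{0})"
    by (simp add: prod.distrib mult_ac)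
  also have "x * x ^ (card (UNIV :: 'k set) - 1) = x ^ Suc (card (UNIV :: 'k set) - 1)"
    by (subst power_Suc) auto
  also have "Suc (card (UNIV :: 'k set) - 1) = card (UNIV :: 'k set)"
    using finite_UNIV_card_ge_0[where ?'a = 'k] by simp
  also have "(\<Prod>y\<in>UNIV-{0}. x * y) = (\<Prod>y\<in>UNIV-{0}. y)"
    by (rule prod.reindex_bij_witness[of _ "\<lambda>y. y / x" "\<lambda>y. x * y"]) (use False in auto)
  finally show ?thesis
    by simp
qed (use finite_UNIV_card_ge_0[where ?'a = 'k] in auto)

lemma power_card_pow_K: "(x::'k::{field,finite}) ^ (CARD('k) ^ n) = x"
  by (induction n) (simp_all add: power_card_K power_mult)

lemma frob_sum:
  fixes f :: "'b \<Rightarrow> 'k::{field,finite} alg_closure"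
  shows "(sum f A) ^ (CARD('k) ^ n) = (\<Sum>i\<in>A. f i ^ (CARD('k) ^ n))"
proof -
  obtain e where e: "CARD('k) = CHAR('k) ^ e" using card_field_prime_power by blast
  have pr: "prime CHAR('k alg_closure)" using prime_CHAR_fin[where 'k='k] by simp
  show ?thesis
    by (rule freshmans_dream_sum'[OF pr, where n="e*n"]) (simp add: e power_mult)
qed

lemma frob_add:
  fixes x y :: "'k::{field,finite} alg_closure"
  shows "(x + y) ^ (CARD('k) ^ n) = x ^ (CARD('k) ^ n) + y ^ (CARD('k) ^ n)"
  using frob_sum[of "\<lambda>b. if b then x else y" UNIV n] by (simp add: UNIV_bool add.commute)

lemma card_K_ge2: "CARD('k::{field,finite}) \<ge> 2"
proof -
  have "{0::'k, 1} \<subseteq> UNIV" by simp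
  hence "card {0::'k, 1} \<le> CARD('k)" by (intro card_mono) simp_all
  thus ?thesis by simp
qed

lemma fixed_in_K:
  fixes y :: "'k::{field,finite} alg_closure"
  assumes "y ^ CARD('k) = y"
  shows "y \<in> range to_ac"
proof (rule ccontr)
  assume ny: "y \<notin> range to_ac"
  let ?q = "CARD('k)"
  define P where "P = monom (1::'k alg_closure) ?q + [:0,-1:]"
  have q2: "?q \<ge> 2" by (rule card_K_ge2)
  have degP: "degree P = ?q" unfolding P_def using q2
    by (subst degree_add_eq_left) (auto simp: degree_monom_eq)
  hence P0: "P \<noteq> 0" using q2 by auto
  have roots: "poly P z = 0 \<longleftrightarrow> z ^ ?q = z" for z
    by (simp add: P_def poly_monom)
  have "insert y (range to_ac) \<subseteq> {z. poly P z = 0}"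
    using assms by (auto simp: roots simp flip: to_ac_power simp: power_card_K)
  hence "card (insert y (range to_ac)) \<le> card {z. poly P z = 0}"
    by (intro card_mono poly_roots_finite P0)
  also have "\<dots> \<le> ?q" using card_poly_roots_bound[OF P0] degP by simp
  finally have "card (insert y (range (to_ac :: 'k \<Rightarrow> _))) \<le> ?q" .
  moreover have "card (range (to_ac :: 'k \<Rightarrow> _)) = ?q"
    using card_image[OF inj_to_ac[where 'a='k]] by simp
  ultimately show False using ny by (simp add: card_insert_if)
qed

lemma of_nat_ne0_K:
  assumes "coprime CARD('g) CHAR('k::{field,finite})" "m dvd CARD('g)"
  shows "(of_nat m :: 'k) \<noteq> 0"
proof
  assume "(of_nat m :: 'k) = 0"
  hence "CHAR('k) dvd m" by (simp add: of_nat_eq_0_iff_char_dvd)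
  hence "CHAR('k) dvd CARD('g)" using assms(2) by (rule dvd_trans)
  hence "CHAR('k) dvd gcd CARD('g) CHAR('k)" by simp
  hence "CHAR('k) = 1" using assms(1) by simp
  thus False by simp
qed

lemma of_nat_ne0_L:
  assumes "coprime CARD('g) CHAR('k::{field,finite})" "m dvd CARD('g)"
  shows "(of_nat m :: 'k alg_closure) \<noteq> 0"
  using of_nat_ne0_K[OF assms] by (metis to_ac_eq_0_iff to_ac_of_nat)

lemma coprime_q_N:
  assumes "coprime CARD('g) CHAR('k::{field,finite})"
  shows "coprime CARD('k) CARD('g)"
proof -
  obtain e where e: "CARD('k) = CHAR('k) ^ e" using card_field_prime_power by blast
  show ?thesis unfolding e using assms by (simp add: coprime_commute)
qed


primrec nm :: "nat \<Rightarrow> 'g::ab_group_add \<Rightarrow> 'g" where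
  "nm 0 g = 0" | "nm (Suc k) g = g + nm k g"

lemma nm_add: "nm (a + b) g = nm a g + nm b g"
  by (induction a) (simp_all add: add.assoc)

lemma nm_mult: "nm (a * b) g = nm a (nm b g)"
  by (induction a) (simp_all add: nm_add)

lemma nm_1 [simp]: "nm 1 g = g" by simp

lemma sum_plus_const: "finite A \<Longrightarrow> (\<Sum>x\<in>A. x + g) = sum (\<lambda>x. x) A + nm (card A) g"
  for g :: "'g::ab_group_add"
  by (induction A rule: finite_induct) (simp_all add: algebra_simps)

lemma nm_card: "nm CARD('g) (g::'g::{ab_group_add,finite}) = 0"
proof -
  have "(\<Sum>x\<in>UNIV. x + g) = (\<Sum>x\<in>UNIV. x)"
    by (rule sum.reindex_bij_witness[of _ "\<lambda>x. x - g" "\<lambda>x. x + g"]) auto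
  thus ?thesis using sum_plus_const[of "UNIV::'g set" g] by simp
qed

section \<open>Characters\<close>

lemma dual_mult: "\<chi> \<in> dual_group \<Longrightarrow> \<chi> (x + y) = \<chi> x * \<chi> y"
  by (simp add: dual_group_def)

lemma dual_nz: "\<chi> \<in> dual_group \<Longrightarrow> \<chi> x \<noteq> 0"
  by (simp add: dual_group_def)

lemma char_0: "\<chi> \<in> dual_group \<Longrightarrow> \<chi> 0 = 1"
proof -
  assume c: "\<chi> \<in> dual_group"
  have "\<chi> 0 * \<chi> 0 = \<chi> 0 * 1" using dual_mult[OF c, of 0 0] by simp
  thus ?thesis using dual_nz[OF c, of 0] by (metis mult_left_cancel)
qed

lemma char_neg: "\<chi> \<in> dual_group \<Longrightarrow> \<chi> (-x) * \<chi> x = 1"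
  using dual_mult[of \<chi> "-x" x] char_0[of \<chi>] by simp

lemma char_neg': "\<chi> \<in> dual_group \<Longrightarrow> \<chi> x * \<chi> (-x) = 1"
  using char_neg[of \<chi> x] by (simp add: mult.commute)

lemma char_neg_inv: "\<chi> \<in> dual_group \<Longrightarrow> \<chi> (-x) = inverse (\<chi> x)"
  using char_neg[of \<chi> x] dual_nz[of \<chi> x] by (simp add: field_simps)

lemma char_nm: "\<chi> \<in> dual_group \<Longrightarrow> \<chi> (nm k x) = \<chi> x ^ k"
  by (induction k) (simp_all add: char_0 dual_mult)

lemma char_pow_N: "\<chi> \<in> dual_group \<Longrightarrow> \<chi> x ^ CARD('g) = 1"
  for \<chi> :: "'g::{ab_group_add,finite} \<Rightarrow> 'k::field alg_closure"
  using char_nm[of \<chi> "CARD('g)" x] nm_card[of x] char_0[of \<chi>] by simp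

lemma char_diff: "\<chi> \<in> dual_group \<Longrightarrow> \<chi> (x - y) = \<chi> x * \<chi> (-y)"
  using dual_mult[of \<chi> x "-y"] by simp

lemma dual_mulI: "\<chi> \<in> dual_group \<Longrightarrow> \<psi> \<in> dual_group \<Longrightarrow> (\<lambda>x. \<chi> x * \<psi> x) \<in> dual_group"
  by (simp add: dual_group_def mult_ac)

lemma dual_invI: "\<chi> \<in> dual_group \<Longrightarrow> (\<lambda>x. \<chi> (-x)) \<in> dual_group"
  unfolding dual_group_def mem_Collect_eq
  by (metis minus_add_distrib add.commute)

lemma dual_powI: "\<chi> \<in> dual_group \<Longrightarrow> (\<lambda>x. \<chi> x ^ n) \<in> dual_group"
  by (simp add: dual_group_def power_mult_distrib)

lemma char_sum:
  fixes \<chi> :: "'g::{ab_group_add,finite} \<Rightarrow> 'k::field alg_closure"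
  assumes c: "\<chi> \<in> dual_group"
  shows "(\<Sum>x\<in>UNIV. \<chi> x) = (if \<forall>x. \<chi> x = 1 then of_nat CARD('g) else 0)"
proof (cases "\<forall>x. \<chi> x = 1")
  case True thus ?thesis by simp
next
  case False
  then obtain y where y: "\<chi> y \<noteq> 1" by auto
  have "(\<Sum>x\<in>UNIV. \<chi> x) = (\<Sum>x\<in>UNIV. \<chi> (x + y))"
    by (rule sum.reindex_bij_witness[of _ "\<lambda>x. x + y" "\<lambda>x. x - y"]) auto
  also have "\<dots> = \<chi> y * (\<Sum>x\<in>UNIV. \<chi> x)"
    by (simp add: dual_mult[OF c] sum_distrib_left mult_ac)
  finally have "(\<chi> y - 1) * (\<Sum>x\<in>UNIV. \<chi> x) = 0" by (simp add: algebra_simps)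
  thus ?thesis using y False by auto
qed

lemma char_orth:
  fixes \<chi> \<psi> :: "'g::{ab_group_add,finite} \<Rightarrow> 'k::field alg_closure"
  assumes c: "\<chi> \<in> dual_group" and d: "\<psi> \<in> dual_group"
  shows "(\<Sum>g\<in>UNIV. \<psi> (-g) * \<chi> g) = (if \<psi> = \<chi> then of_nat CARD('g) else 0)"
proof -
  have m: "(\<lambda>g. \<psi> (-g) * \<chi> g) \<in> dual_group"
    by (rule dual_mulI[OF dual_invI[OF d] c])
  have "(\<forall>g. \<psi> (-g) * \<chi> g = 1) \<longleftrightarrow> \<psi> = \<chi>"
  proof
    assume h: "\<forall>g. \<psi> (-g) * \<chi> g = 1"
    show "\<psi> = \<chi>"
    proof
      fix g
      have "\<psi> g * (\<psi> (-g) * \<chi> g) = \<psi> g" using h by simp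
      thus "\<psi> g = \<chi> g" using char_neg'[OF d, of g] by (simp add: mult.assoc[symmetric])
    qed
  next
    assume "\<psi> = \<chi>" thus "\<forall>g. \<psi> (-g) * \<chi> g = 1" using char_neg[OF c] by simp
  qed
  thus ?thesis using char_sum[OF m] by simp
qed

lemma conv_char:
  assumes c: "\<chi> \<in> dual_group"
  shows "conv F \<chi> = (\<lambda>x. (\<Sum>h\<in>UNIV. F h * \<chi> (-h)) * \<chi> x)"
  unfolding conv_def
  by (rule ext) (simp add: char_diff[OF c] sum_distrib_left mult_ac)

lemma conv_chars:
  fixes \<chi> \<psi> :: "'g::{ab_group_add,finite} \<Rightarrow> 'k::field alg_closure"
  assumes c: "\<chi> \<in> dual_group" and d: "\<psi> \<in> dual_group"
  shows "conv \<chi> \<psi> = (if \<chi> = \<psi> then (\<lambda>x. of_nat CARD('g) * \<chi> x) else (\<lambda>_. 0))"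
proof -
  have "(\<Sum>h\<in>UNIV. \<chi> h * \<psi> (-h)) = (if \<psi> = \<chi> then of_nat CARD('g) else 0)"
    using char_orth[OF c d] by (simp add: mult.commute)
  thus ?thesis unfolding conv_char[OF d] by auto
qed

lemma finite_dual: "finite (dual_group :: ('g::{ab_group_add,finite} \<Rightarrow> 'k::field alg_closure) set)"
proof -
  define P where "P = monom (1::'k alg_closure) CARD('g) + [:-1:]"
  have degP: "degree P = CARD('g)" unfolding P_def
    by (subst degree_add_eq_left) (auto simp: degree_monom_eq)
  hence P0: "P \<noteq> 0" by auto
  define R where "R = {z. poly P z = 0}"
  have R: "finite R" unfolding R_def by (rule poly_roots_finite[OF P0])
  have "dual_group \<subseteq> PiE (UNIV::'g set) (\<lambda>_. R)"
    by (auto simp: R_def P_def poly_monom char_pow_N)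
  moreover have "finite (PiE (UNIV::'g set) (\<lambda>_. R))" by (rule finite_PiE) (simp_all add: R)
  ultimately show ?thesis by (rule finite_subset)
qed

section \<open>Convolution algebra\<close>

lemma conv_comm: "conv f u = conv u (f::'g::{ab_group_add,finite} \<Rightarrow> 'f::comm_ring_1)"
  unfolding conv_def
proof (rule ext)
  fix g
  show "(\<Sum>h\<in>UNIV. f h * u (g - h)) = (\<Sum>h\<in>UNIV. u h * f (g - h))"
    by (rule sum.reindex_bij_witness[of _ "\<lambda>h. g - h" "\<lambda>h. g - h"]) (auto simp: mult.commute)
qed

lemma conv_assoc: "conv (conv f u) v = conv f (conv u (v::'g::{ab_group_add,finite} \<Rightarrow> 'f::comm_ring_1))"
proof
  fix x
  have "conv (conv f u) v x = (\<Sum>h\<in>UNIV. \<Sum>k\<in>UNIV. f k * u (h - k) * v (x - h))"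
    by (simp add: conv_def sum_distrib_right)
  also have "\<dots> = (\<Sum>k\<in>UNIV. \<Sum>h\<in>UNIV. f k * u (h - k) * v (x - h))"
    by (rule sum.swap)
  also have "\<dots> = (\<Sum>k\<in>UNIV. \<Sum>h\<in>UNIV. f k * (u h * v (x - k - h)))"
  proof (rule sum.cong[OF refl])
    fix k
    show "(\<Sum>h\<in>UNIV. f k * u (h - k) * v (x - h)) = (\<Sum>h\<in>UNIV. f k * (u h * v (x - k - h)))"
      by (rule sum.reindex_bij_witness[of _ "\<lambda>h. h + k" "\<lambda>h. h - k"]) (auto simp: mult.assoc algebra_simps)
  qed
  also have "\<dots> = conv f (conv u v) x"
    by (simp add: conv_def sum_distrib_left)
  finally show "conv (conv f u) v x = conv f (conv u v) x" .
qed

lemma conv_sum_left: "conv (\<lambda>x. \<Sum>i\<in>A. f i x) u = (\<lambda>x. \<Sum>i\<in>A. conv (f i) u x)"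
  unfolding conv_def by (rule ext) (simp add: sum_distrib_right, rule sum.swap)

lemma conv_smult_left: "conv (\<lambda>x. c * f x) u = (\<lambda>x. c * conv f u x)"
  unfolding conv_def by (simp add: sum_distrib_left mult_ac)

lemma conv_zero_left: "conv (\<lambda>_. 0) u = (\<lambda>_. 0)"
  unfolding conv_def by simp

lemma conv_to_ac: "to_ac (conv f u x) = conv (\<lambda>y. to_ac (f y)) (\<lambda>y. to_ac (u y)) x"
  unfolding conv_def by (simp add: to_ac_sum)


definition subgrp :: "'g::{ab_group_add,finite} set \<Rightarrow> bool" where
  "subgrp H \<longleftrightarrow> 0 \<in> H \<and> (\<forall>x\<in>H. \<forall>y\<in>H. x + y \<in> H)"

definition charon :: "'g::{ab_group_add,finite} set \<Rightarrow> ('g \<Rightarrow> 'k::field alg_closure) \<Rightarrow> bool" where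
  "charon H \<chi> \<longleftrightarrow> (\<forall>x\<in>H. \<forall>y\<in>H. \<chi> (x + y) = \<chi> x * \<chi> y) \<and> (\<forall>x\<in>H. \<chi> x \<noteq> 0)"

lemma subgrp_add: "subgrp H \<Longrightarrow> x \<in> H \<Longrightarrow> y \<in> H \<Longrightarrow> x + y \<in> H"
  by (simp add: subgrp_def)

lemma subgrp_nm: "subgrp H \<Longrightarrow> x \<in> H \<Longrightarrow> nm k x \<in> H"
  by (induction k) (auto simp: subgrp_def)

lemma subgrp_neg: "subgrp H \<Longrightarrow> x \<in> H \<Longrightarrow> -x \<in> H"
proof -
  assume H: "subgrp H" and x: "x \<in> H"
  have N: "CARD('a) = Suc (CARD('a) - 1)" by simp
  have "nm CARD('a) x = 0" by (rule nm_card)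
  moreover have "x + nm (CARD('a) - 1) x = nm (Suc (CARD('a) - 1)) x" by (simp only: nm.simps)
  moreover have "nm (Suc (CARD('a) - 1)) x = nm CARD('a) x" by (simp only: N[symmetric])
  ultimately have "x + nm (CARD('a) - 1) x = 0" by simp
  hence "-x = nm (CARD('a) - 1) x" by (rule add.inverse_unique)
  thus ?thesis using subgrp_nm[OF H x] by simp
qed

lemma charon_0: "subgrp H \<Longrightarrow> charon H \<chi> \<Longrightarrow> \<chi> 0 = 1"
proof -
  assume H: "subgrp H" and c: "charon H \<chi>"
  have "\<chi> (0 + 0) = \<chi> 0 * \<chi> 0" using c H unfolding charon_def subgrp_def by blast
  hence "\<chi> 0 * \<chi> 0 = \<chi> 0 * 1" by simp
  moreover have "\<chi> 0 \<noteq> 0" using c H by (simp add: charon_def subgrp_def)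
  ultimately show ?thesis by (metis mult_left_cancel)
qed

lemma charon_nm: "subgrp H \<Longrightarrow> charon H \<chi> \<Longrightarrow> x \<in> H \<Longrightarrow> \<chi> (nm k x) = \<chi> x ^ k"
proof (induction k)
  case 0 thus ?case by (simp add: charon_0)
next
  case (Suc k)
  have "\<chi> (x + nm k x) = \<chi> x * \<chi> (nm k x)"
    using Suc.prems subgrp_nm[of H x k] by (simp add: charon_def)
  thus ?case using Suc by simp
qed

lemma least_mult_ex:
  fixes g :: "'g::{ab_group_add,finite}"
  assumes H: "subgrp H"
  defines "m \<equiv> (LEAST m. 0 < m \<and> nm m g \<in> H)"
  shows "0 < m" "nm m g \<in> H" "\<And>j. nm j g \<in> H \<Longrightarrow> m dvd j"
proof -
  have ex: "0 < CARD('g) \<and> nm CARD('g) g \<in> H" using H by (simp add: nm_card subgrp_def)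
  have P: "0 < m \<and> nm m g \<in> H" unfolding m_def by (rule LeastI[of "\<lambda>m. 0 < m \<and> nm m g \<in> H" "CARD('g)", OF ex])
  thus "0 < m" "nm m g \<in> H" by auto
  fix j assume j: "nm j g \<in> H"
  have "nm j g = nm ((j div m) * m) g + nm (j mod m) g"
    by (simp flip: nm_add)
  hence "nm (j mod m) g = nm j g + - nm ((j div m) * m) g" by (simp add: algebra_simps)
  moreover have "nm ((j div m) * m) g \<in> H"
    unfolding nm_mult using subgrp_nm[OF H] P by simp
  ultimately have "nm (j mod m) g \<in> H" using subgrp_neg[OF H] subgrp_add[OF H] j by metis
  moreover have "j mod m < m" using P by simp
  ultimately have "\<not> 0 < j mod m" unfolding m_def using not_less_Least by (metis m_def)
  thus "m dvd j" by (simp add: dvd_eq_mod_eq_0)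
qed

lemma ext_step:
  fixes g :: "'g::{ab_group_add,finite}" and \<chi> :: "'g \<Rightarrow> 'k::field alg_closure"
  assumes H: "subgrp H" and c: "charon H \<chi>" and g: "g \<notin> H"
    and z: "z ^ (LEAST m. 0 < m \<and> nm m g \<in> H) = \<chi> (nm (LEAST m. 0 < m \<and> nm m g \<in> H) g)"
  shows "\<exists>H' \<chi>'. subgrp H' \<and> charon H' \<chi>' \<and> H \<subseteq> H' \<and> g \<in> H' \<and> (\<forall>x\<in>H. \<chi>' x = \<chi> x) \<and> \<chi>' g = z"
proof -
  define m where "m = (LEAST m. 0 < m \<and> nm m g \<in> H)"
  note L = least_mult_ex[OF H, where g=g, folded m_def]
  have zm: "z ^ m = \<chi> (nm m g)" using z unfolding m_def .
  have cm: "\<chi> (x + y) = \<chi> x * \<chi> y" if "x \<in> H" "y \<in> H" for x y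
    using c that by (simp add: charon_def)
  have c0: "\<chi> x \<noteq> 0" if "x \<in> H" for x using c that by (simp add: charon_def)
  have z0: "z \<noteq> 0"
  proof
    assume "z = 0" hence "\<chi> (nm m g) = 0" using zm L(1) by (metis zero_power)
    thus False using c0[OF L(2)] by simp
  qed
  have wd1: "\<chi> h * z ^ k = \<chi> h' * z ^ k'"
    if hh: "h \<in> H" "h' \<in> H" and kk: "k \<le> k'" and eq: "h + nm k g = h' + nm k' g" for h h' k k'
  proof -
    have "nm k' g = nm (k' - k) g + nm k g" using kk by (simp flip: nm_add)
    hence hx: "h = h' + nm (k' - k) g" using eq by (simp add: algebra_simps)
    hence "nm (k' - k) g = h + - h'" by (simp add: algebra_simps)
    hence "nm (k' - k) g \<in> H" using subgrp_add[OF H] subgrp_neg[OF H] hh by metis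
    then obtain l where l: "k' - k = l * m" using L(3) by (metis dvd_def mult.commute)
    have "\<chi> h = \<chi> h' * \<chi> (nm m g) ^ l"
      using hx l hh L(2) by (simp add: nm_mult cm subgrp_nm[OF H] charon_nm[OF H c])
    also have "\<dots> = \<chi> h' * z ^ (m * l)" using zm by (simp add: power_mult)
    finally have "\<chi> h * z ^ k = \<chi> h' * z ^ (m * l + k)" by (simp add: power_add mult.assoc)
    also have "m * l + k = k'" using l kk by (simp add: mult.commute)
    finally show ?thesis .
  qed
  have wd: "\<chi> h * z ^ k = \<chi> h' * z ^ k'"
    if "h \<in> H" "h' \<in> H" "h + nm k g = h' + nm k' g" for h h' k k'
    using wd1[of h h' k k'] wd1[of h' h k' k] that by (cases "k \<le> k'") auto
  define H' where "H' = {h + nm k g | h k. h \<in> H}"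
  define \<chi>' where "\<chi>' = (\<lambda>y. SOME v. \<exists>h k. h \<in> H \<and> y = h + nm k g \<and> v = \<chi> h * z ^ k)"
  have val: "\<chi>' (h + nm k g) = \<chi> h * z ^ k" if "h \<in> H" for h k
  proof -
    have ex: "\<exists>v. \<exists>h' k'. h' \<in> H \<and> h + nm k g = h' + nm k' g \<and> v = \<chi> h' * z ^ k'"
      using that by blast
    from someI_ex[OF ex] obtain h' k' where "h' \<in> H" "h + nm k g = h' + nm k' g"
      "\<chi>' (h + nm k g) = \<chi> h' * z ^ k'" unfolding \<chi>'_def by blast
    thus ?thesis using wd[of h h' k k'] that by simp
  qed
  have "subgrp H'"
    unfolding subgrp_def H'_def
  proof (intro conjI ballI)
    show "0 \<in> {h + nm k g |h k. h \<in> H}" using H by (auto simp: subgrp_def intro!: exI[of _ 0])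
    fix x y assume "x \<in> {h + nm k g |h k. h \<in> H}" "y \<in> {h + nm k g |h k. h \<in> H}"
    then obtain h1 k1 h2 k2 where "x = h1 + nm k1 g" "h1 \<in> H" "y = h2 + nm k2 g" "h2 \<in> H" by auto
    moreover have "h1 + nm k1 g + (h2 + nm k2 g) = (h1 + h2) + nm (k1 + k2) g"
      by (simp add: nm_add algebra_simps)
    ultimately show "x + y \<in> {h + nm k g |h k. h \<in> H}" using subgrp_add[OF H] by blast
  qed
  moreover have "charon H' \<chi>'"
    unfolding charon_def H'_def
  proof (intro conjI ballI)
    fix x y assume "x \<in> {h + nm k g |h k. h \<in> H}" "y \<in> {h + nm k g |h k. h \<in> H}"
    then obtain h1 k1 h2 k2 where xy: "x = h1 + nm k1 g" "h1 \<in> H" "y = h2 + nm k2 g" "h2 \<in> H" by auto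
    have e: "x + y = (h1 + h2) + nm (k1 + k2) g" unfolding xy
      by (simp add: nm_add algebra_simps)
    have "\<chi>' (x + y) = \<chi> (h1 + h2) * z ^ (k1 + k2)" unfolding e
      by (rule val, rule subgrp_add[OF H xy(2) xy(4)])
    also have "\<dots> = \<chi>' x * \<chi>' y" using xy val cm by (simp add: power_add mult_ac)
    finally show "\<chi>' (x + y) = \<chi>' x * \<chi>' y" .
  next
    fix x assume "x \<in> {h + nm k g |h k. h \<in> H}"
    then obtain h k where "x = h + nm k g" "h \<in> H" by auto
    thus "\<chi>' x \<noteq> 0" using val c0 z0 by simp
  qed
  moreover have "H \<subseteq> H'" unfolding H'_def by (force intro: exI[of _ 0])
  moreover have gH: "g \<in> H'" unfolding H'_def using H
    by (auto simp: subgrp_def intro!: exI[of _ 0] exI[of _ 1])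
  moreover have "\<forall>x\<in>H. \<chi>' x = \<chi> x" using val[of _ 0] by simp
  moreover have "\<chi>' g = z" using val[of 0 1] H charon_0[OF H c] by (simp add: subgrp_def)
  ultimately show ?thesis by blast
qed

lemma extend_all:
  fixes \<chi> :: "'g::{ab_group_add,finite} \<Rightarrow> 'k::field alg_closure"
  assumes "subgrp H" "charon H \<chi>"
  shows "\<exists>\<chi>'\<in>dual_group. \<forall>x\<in>H. \<chi>' x = \<chi> x"
  using assms
proof (induction "card (UNIV - H)" arbitrary: H \<chi> rule: less_induct)
  case less
  show ?case
  proof (cases "H = UNIV")
    case True
    hence "\<chi> \<in> dual_group" using less.prems by (simp add: charon_def dual_group_def)
    thus ?thesis by blast
  next
    case False
    then obtain g where g: "g \<notin> H" by auto
    obtain z where z: "z ^ (LEAST m. 0 < m \<and> nm m g \<in> H) = \<chi> (nm (LEAST m. 0 < m \<and> nm m g \<in> H) g)"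
      using nth_root_exists[OF least_mult_ex(1)[OF less.prems(1), where g=g]] by blast
    obtain H' \<chi>' where st: "subgrp H'" "charon H' \<chi>'" "H \<subseteq> H'" "g \<in> H'" "\<forall>x\<in>H. \<chi>' x = \<chi> x"
      using ext_step[OF less.prems g z] by blast
    have "card (UNIV - H') < card (UNIV - H)"
      using st g by (intro psubset_card_mono) auto
    from less.hyps[OF this st(1,2)] obtain c where "c \<in> dual_group" "\<forall>x\<in>H'. c x = \<chi>' x"
      by blast
    thus ?thesis using st(3,5) by (intro bexI[of _ c]) auto
  qed
qed

lemma separate:
  fixes x :: "'g::{ab_group_add,finite}"
  assumes cop: "coprime CARD('g) CHAR('k::{field,finite})" and x: "x \<noteq> 0"
  shows "\<exists>\<chi>\<in>(dual_group :: ('g \<Rightarrow> 'k alg_closure) set). \<chi> x \<noteq> 1"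
proof -
  define H where "H = {0::'g}"
  have H: "subgrp H" by (simp add: H_def subgrp_def)
  define \<chi> where "\<chi> = (\<lambda>_::'g. 1::'k alg_closure)"
  have c: "charon H \<chi>" by (simp add: charon_def \<chi>_def)
  define m where "m = (LEAST m. 0 < m \<and> nm m x \<in> H)"
  note L = least_mult_ex[OF H, where g=x, folded m_def]
  have "m \<noteq> 1" using L(2) x by (auto simp: H_def)
  hence m2: "m - 1 > 0" using L(1) by simp
  have "m dvd CARD('g)" using L(3)[of "CARD('g)"] by (simp add: nm_card H_def)
  hence mnz: "(of_nat m :: 'k alg_closure) \<noteq> 0" using of_nat_ne0_L[OF cop] by blast
  obtain z :: "'k alg_closure" where z: "(\<Sum>k\<le>m-1. 1 * z ^ k) = 0"
    using alg_closed[of "m-1" "\<lambda>_. 1"] m2 by auto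
  have sm: "{..m-1} = {..<m}" using L(1) by auto
  have zs: "(\<Sum>k<m. z ^ k) = 0" using z sm by simp
  have z1: "z \<noteq> 1" using zs mnz by auto
  have "z ^ m - 1 = 0" using power_diff_1_eq[of z m] zs by simp
  hence zm: "z ^ m = \<chi> (nm m x)" by (simp add: \<chi>_def)
  have xH: "x \<notin> H" using x by (simp add: H_def)
  obtain H' \<chi>' where st: "subgrp H'" "charon H' \<chi>'" "x \<in> H'" "\<chi>' x = z"
    using ext_step[OF H c xH zm[unfolded m_def]] by blast
  obtain \<chi>'' where "\<chi>'' \<in> dual_group" "\<forall>y\<in>H'. \<chi>'' y = \<chi>' y"
    using extend_all[OF st(1,2)] by blast
  thus ?thesis using st z1 by (intro bexI[of _ \<chi>'']) auto
qed


lemma dual_sum_nz: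
  assumes cop: "coprime CARD('g) CHAR('k::{field,finite})" and x: "(x::'g::{ab_group_add,finite}) \<noteq> 0"
  shows "(\<Sum>\<chi>\<in>(dual_group :: ('g \<Rightarrow> 'k alg_closure) set). \<chi> x) = 0"
proof -
  obtain \<chi>0 :: "'g \<Rightarrow> 'k alg_closure" where c0: "\<chi>0 \<in> dual_group" "\<chi>0 x \<noteq> 1"
    using separate[OF cop x] by blast
  have "(\<Sum>\<chi>\<in>(dual_group :: ('g \<Rightarrow> 'k alg_closure) set). \<chi> x)
      = (\<Sum>\<chi>\<in>(dual_group :: ('g \<Rightarrow> 'k alg_closure) set). \<chi>0 x * \<chi> x)"
  proof (rule sum.reindex_bij_witness[of _ "\<lambda>\<psi> y. \<chi>0 y * \<psi> y" "\<lambda>\<psi> y. \<chi>0 (-y) * \<psi> y"])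
    fix a :: "'g \<Rightarrow> 'k alg_closure" assume a: "a \<in> dual_group"
    show "(\<lambda>y. \<chi>0 y * (\<chi>0 (- y) * a y)) = a"
      by (rule ext) (simp add: mult.assoc[symmetric] char_neg'[OF c0(1)])
    show "(\<lambda>y. \<chi>0 (- y) * a y) \<in> dual_group" by (rule dual_mulI[OF dual_invI[OF c0(1)] a])
    show "(\<lambda>y. \<chi>0 (- y) * (\<chi>0 y * a y)) = a"
      by (rule ext) (simp add: mult.assoc[symmetric] char_neg[OF c0(1)])
    show "(\<lambda>y. \<chi>0 y * a y) \<in> dual_group" by (rule dual_mulI[OF c0(1) a])
    show "\<chi>0 x * (\<chi>0 (- x) * a x) = a x"
      by (simp add: mult.assoc[symmetric] char_neg'[OF c0(1)])
  qed
  also have "\<dots> = \<chi>0 x * (\<Sum>\<chi>\<in>(dual_group :: ('g \<Rightarrow> 'k alg_closure) set). \<chi> x)"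
    by (simp add: sum_distrib_left)
  finally have "(\<chi>0 x - 1) * (\<Sum>\<chi>\<in>(dual_group :: ('g \<Rightarrow> 'k alg_closure) set). \<chi> x) = 0"
    by (simp add: algebra_simps)
  thus ?thesis using c0(2) by simp
qed

lemma triv_dual: "(\<lambda>_. 1) \<in> dual_group"
  by (simp add: dual_group_def)

lemma dual_sum:
  assumes cop: "coprime CARD('g) CHAR('k::{field,finite})"
  shows "(\<Sum>\<chi>\<in>(dual_group :: ('g::{ab_group_add,finite} \<Rightarrow> 'k alg_closure) set). \<chi> x)
     = (if x = 0 then of_nat CARD('g) else 0)"
proof -
  let ?D = "dual_group :: ('g \<Rightarrow> 'k alg_closure) set"
  have fin: "finite ?D" by (rule finite_dual)
  have s0: "(\<Sum>\<chi>\<in>?D. \<chi> 0) = of_nat (card ?D)" by (simp add: char_0)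
  have "(\<Sum>x\<in>UNIV. \<Sum>\<chi>\<in>?D. \<chi> x) = (\<Sum>x\<in>UNIV. if (x::'g) = 0 then of_nat (card ?D) else 0)"
    by (rule sum.cong[OF refl]) (simp add: s0 dual_sum_nz[OF cop])
  also have "\<dots> = of_nat (card ?D)" by simp
  finally have A: "(\<Sum>x\<in>UNIV. \<Sum>\<chi>\<in>?D. \<chi> x) = of_nat (card ?D)" .
  have "(\<Sum>x\<in>UNIV. \<Sum>\<chi>\<in>?D. \<chi> x) = (\<Sum>\<chi>\<in>?D. \<Sum>x\<in>UNIV. \<chi> x)" by (rule sum.swap)
  also have "\<dots> = (\<Sum>\<chi>\<in>?D. if \<chi> = (\<lambda>_. 1) then of_nat CARD('g) else 0)"
  proof (rule sum.cong[OF refl])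
    fix \<chi> assume c: "\<chi> \<in> ?D"
    have "(\<forall>x. \<chi> x = 1) \<longleftrightarrow> \<chi> = (\<lambda>_. 1)" by auto
    thus "(\<Sum>x\<in>UNIV. \<chi> x) = (if \<chi> = (\<lambda>_. 1) then of_nat CARD('g) else 0)"
      using char_sum[OF c] by simp
  qed
  also have "\<dots> = of_nat CARD('g)"
  proof -
    have T: "(\<lambda>_. 1) \<in> ?D" by (rule triv_dual)
    show ?thesis using fin T by (simp add: sum.delta')
  qed
  finally have "(of_nat (card ?D) :: 'k alg_closure) = of_nat CARD('g)" using A by simp
  thus ?thesis using s0 dual_sum_nz[OF cop] by simp
qed

lemma fourier:
  assumes cop: "coprime CARD('g) CHAR('k::{field,finite})"
  shows "of_nat CARD('g) * F x
     = (\<Sum>\<chi>\<in>(dual_group :: ('g::{ab_group_add,finite} \<Rightarrow> 'k alg_closure) set). conv F \<chi> x)"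
proof -
  let ?D = "dual_group :: ('g \<Rightarrow> 'k alg_closure) set"
  have "(\<Sum>\<chi>\<in>?D. conv F \<chi> x) = (\<Sum>h\<in>UNIV. F h * (\<Sum>\<chi>\<in>?D. \<chi> (x - h)))"
    unfolding conv_def by (simp add: sum_distrib_left, rule sum.swap)
  also have "\<dots> = (\<Sum>h\<in>UNIV. if h = x then F x * of_nat CARD('g) else 0)"
    by (rule sum.cong[OF refl]) (simp add: dual_sum[OF cop])
  also have "\<dots> = of_nat CARD('g) * F x" by (simp add: mult.commute)
  finally show ?thesis by simp
qed

section \<open>Frobenius orbits\<close>

definition powq :: "('g \<Rightarrow> 'k::{field,finite} alg_closure) \<Rightarrow> nat \<Rightarrow> 'g \<Rightarrow> 'k alg_closure" where
  "powq \<chi> n = (\<lambda>x. \<chi> x ^ (CARD('k) ^ n))"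

lemma powq_0 [simp]: "powq \<chi> 0 = \<chi>"
  by (simp add: powq_def)

lemma powq_add: "powq \<chi> (a + b) = powq (powq \<chi> a) b"
  by (simp add: powq_def power_add power_mult)

lemma Dq_iter: "(Dq ^^ n) \<chi> = powq \<chi> n"
proof (induction n)
  case (Suc n)
  have "(Dq ^^ Suc n) \<chi> = Dq (powq \<chi> n)" using Suc by simp
  also have "\<dots> = powq \<chi> (Suc n)"
    by (simp add: Dq_def powq_def power_mult[symmetric] power_Suc2 mult.commute)
  finally show ?case .
qed simp

lemma Dq_orbit_range: "Dq_orbit \<chi> = range (powq \<chi>)"
  by (auto simp: Dq_orbit_def Dq_iter)

lemma powq_dual: "\<chi> \<in> dual_group \<Longrightarrow> powq \<chi> n \<in> dual_group"
  unfolding powq_def by (rule dual_powI)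

lemma pow_mod_N: "(y::'a::comm_monoid_mult) ^ N = 1 \<Longrightarrow> y ^ a = y ^ (a mod N)"
proof -
  assume y: "y ^ N = 1"
  have "y ^ (N * (a div N) + a mod N) = (y ^ N) ^ (a div N) * y ^ (a mod N)"
    by (simp only: power_add power_mult)
  thus ?thesis using y by simp
qed

lemma rdeg_ex:
  fixes \<chi> :: "'g::{ab_group_add,finite} \<Rightarrow> 'k::{field,finite} alg_closure"
  assumes cop: "coprime CARD('g) CHAR('k)" and c: "\<chi> \<in> dual_group"
  shows "totient CARD('g) \<ge> 1 \<and> (\<forall>x. \<chi> x ^ (CARD('k) ^ totient CARD('g)) = \<chi> x)"
proof -
  have e: "[CARD('k) ^ totient CARD('g) = 1] (mod CARD('g))"
    by (rule euler_theorem[OF coprime_q_N[OF cop]])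
  have "\<chi> x ^ (CARD('k) ^ totient CARD('g)) = \<chi> x" for x
  proof -
    have N: "\<chi> x ^ CARD('g) = 1" by (rule char_pow_N[OF c])
    have "\<chi> x ^ (CARD('k) ^ totient CARD('g)) = \<chi> x ^ (CARD('k) ^ totient CARD('g) mod CARD('g))"
      by (rule pow_mod_N[OF N])
    also have "\<dots> = \<chi> x ^ (1 mod CARD('g))" using e by (simp add: cong_def)
    also have "\<dots> = \<chi> x ^ 1" by (rule pow_mod_N[OF N, symmetric])
    finally show ?thesis by simp
  qed
  moreover have "totient CARD('g) \<ge> 1" by (simp add: Suc_le_eq)
  ultimately show ?thesis by blast
qed

lemma rdeg_props:
  fixes \<chi> :: "'g::{ab_group_add,finite} \<Rightarrow> 'k::{field,finite} alg_closure"
  assumes cop: "coprime CARD('g) CHAR('k)" and c: "\<chi> \<in> dual_group"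
  shows "rdeg \<chi> \<ge> 1" "powq \<chi> (rdeg \<chi>) = \<chi>" "\<And>i. 0 < i \<Longrightarrow> i < rdeg \<chi> \<Longrightarrow> powq \<chi> i \<noteq> \<chi>"
proof -
  let ?P = "\<lambda>n. n \<ge> 1 \<and> (\<forall>x. \<chi> x ^ (CARD('k) ^ n) = \<chi> x)"
  have ex: "?P (totient CARD('g))" using rdeg_ex[OF cop c] by blast
  have P: "?P (rdeg \<chi>)" unfolding rdeg_def by (rule LeastI[of ?P, OF ex])
  thus "rdeg \<chi> \<ge> 1" by simp
  show "powq \<chi> (rdeg \<chi>) = \<chi>" using P by (simp add: powq_def fun_eq_iff)
  fix i assume i: "0 < i" "i < rdeg \<chi>"
  have "\<not> ?P i" using not_less_Least[of i ?P] i unfolding rdeg_def by blast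
  thus "powq \<chi> i \<noteq> \<chi>" using i by (auto simp: powq_def fun_eq_iff)
qed

lemma powq_mult_r:
  assumes "powq \<chi> r = \<chi>"
  shows "powq \<chi> (r * c) = \<chi>"
proof (induction c)
  case (Suc c)
  have "powq \<chi> (r * Suc c) = powq (powq \<chi> (r * c)) r" by (simp add: powq_add[symmetric] add.commute)
  thus ?case using Suc assms by simp
qed simp

lemma powq_mod:
  assumes "powq \<chi> r = \<chi>"
  shows "powq \<chi> n = powq \<chi> (n mod r)"
proof -
  have "powq \<chi> n = powq \<chi> (r * (n div r) + n mod r)" by simp
  also have "\<dots> = powq \<chi> (n mod r)" by (simp only: powq_add powq_mult_r[OF assms])
  finally show ?thesis .
qed

lemma powq_inj:
  fixes \<chi> :: "'g::{ab_group_add,finite} \<Rightarrow> 'k::{field,finite} alg_closure"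
  assumes cop: "coprime CARD('g) CHAR('k)" and c: "\<chi> \<in> dual_group"
  shows "inj_on (powq \<chi>) {..<rdeg \<chi>}"
proof -
  note R = rdeg_props[OF cop c]
  have main: "i = j" if ij: "i < rdeg \<chi>" "j < rdeg \<chi>" "i \<le> j" "powq \<chi> i = powq \<chi> j" for i j
  proof (rule ccontr)
    assume "i \<noteq> j"
    have "powq \<chi> (i + (rdeg \<chi> - j)) = powq (powq \<chi> j) (rdeg \<chi> - j)" by (simp add: powq_add ij(4))
    also have "\<dots> = powq \<chi> (rdeg \<chi>)" using ij by (simp flip: powq_add)
    also have "\<dots> = \<chi>" by (rule R(2))
    finally have eq: "powq \<chi> (i + (rdeg \<chi> - j)) = \<chi>" .
    have "0 < i + (rdeg \<chi> - j)" "i + (rdeg \<chi> - j) < rdeg \<chi>"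
      using ij \<open>i \<noteq> j\<close> by arith+
    from R(3)[OF this] eq show False by simp
  qed
  show ?thesis
  proof (rule inj_onI)
    fix i j assume "i \<in> {..<rdeg \<chi>}" "j \<in> {..<rdeg \<chi>}" "powq \<chi> i = powq \<chi> j"
    thus "i = j" using main[of i j] main[of j i] by (cases "i \<le> j") auto
  qed
qed

lemma orbit_eq:
  fixes \<chi> :: "'g::{ab_group_add,finite} \<Rightarrow> 'k::{field,finite} alg_closure"
  assumes cop: "coprime CARD('g) CHAR('k)" and c: "\<chi> \<in> dual_group"
  shows "Dq_orbit \<chi> = powq \<chi> ` {..<rdeg \<chi>}"
proof -
  note R = rdeg_props[OF cop c]
  have "range (powq \<chi>) = powq \<chi> ` {..<rdeg \<chi>}"
  proof
    show "range (powq \<chi>) \<subseteq> powq \<chi> ` {..<rdeg \<chi>}"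
    proof
      fix y assume "y \<in> range (powq \<chi>)"
      then obtain n where "y = powq \<chi> n" by auto
      hence "y = powq \<chi> (n mod rdeg \<chi>)" using powq_mod[OF R(2)] by simp
      moreover have "n mod rdeg \<chi> < rdeg \<chi>" using R(1) by simp
      ultimately show "y \<in> powq \<chi> ` {..<rdeg \<chi>}" by auto
    qed
  qed auto
  thus ?thesis by (simp add: Dq_orbit_range)
qed

lemma Tr_orbit:
  fixes \<chi> :: "'g::{ab_group_add,finite} \<Rightarrow> 'k::{field,finite} alg_closure"
  assumes cop: "coprime CARD('g) CHAR('k)" and c: "\<chi> \<in> dual_group"
  shows "Tr \<chi> = (\<lambda>x. \<Sum>\<phi>\<in>Dq_orbit \<chi>. \<phi> x)"
proof
  fix x
  have "(\<Sum>\<phi>\<in>Dq_orbit \<chi>. \<phi> x) = (\<Sum>i<rdeg \<chi>. powq \<chi> i x)"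
    unfolding orbit_eq[OF cop c] by (subst sum.reindex[OF powq_inj[OF cop c]]) simp
  thus "Tr \<chi> x = (\<Sum>\<phi>\<in>Dq_orbit \<chi>. \<phi> x)" by (simp add: Tr_def powq_def)
qed

lemma self_orbit: "\<chi> \<in> Dq_orbit \<chi>"
  by (simp add: Dq_orbit_range) (metis powq_0 rangeI)

lemma orbit_dual: "\<chi> \<in> dual_group \<Longrightarrow> Dq_orbit \<chi> \<subseteq> dual_group"
  by (auto simp: Dq_orbit_range powq_dual)

lemma finite_orbit:
  fixes \<chi> :: "'g::{ab_group_add,finite} \<Rightarrow> 'k::{field,finite} alg_closure"
  assumes cop: "coprime CARD('g) CHAR('k)" and c: "\<chi> \<in> dual_group"
  shows "finite (Dq_orbit \<chi>)"
  by (simp add: orbit_eq[OF cop c])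

lemma orbit_mem:
  fixes \<chi> :: "'g::{ab_group_add,finite} \<Rightarrow> 'k::{field,finite} alg_closure"
  assumes cop: "coprime CARD('g) CHAR('k)" and c: "\<chi> \<in> dual_group" and p: "\<psi> \<in> Dq_orbit \<chi>"
  shows "Dq_orbit \<psi> = Dq_orbit \<chi>"
proof -
  note R = rdeg_props[OF cop c]
  let ?r = "rdeg \<chi>"
  obtain n where n: "\<psi> = powq \<chi> n" using p by (auto simp: Dq_orbit_range)
  have "range (powq \<psi>) = range (powq \<chi>)"
  proof
    show "range (powq \<psi>) \<subseteq> range (powq \<chi>)" by (auto simp: n simp flip: powq_add)
    show "range (powq \<chi>) \<subseteq> range (powq \<psi>)"
    proof
      fix y assume "y \<in> range (powq \<chi>)"
      then obtain i where i: "y = powq \<chi> i" by auto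
      have "(n + (?r - n mod ?r + i)) mod ?r = i mod ?r"
      proof -
        have a1: "n mod ?r < ?r" using R(1) by simp
        have a2: "n = ?r * (n div ?r) + n mod ?r" by simp
        have a3: "?r * (n div ?r + 1) = ?r * (n div ?r) + ?r" by simp
        have e: "n + (?r - n mod ?r + i) = i + ?r * (n div ?r + 1)"
          using a1 a2 a3 by linarith
        show ?thesis by (simp only: e mod_mult_self2)
      qed
      hence "powq \<psi> (?r - n mod ?r + i) = y"
        unfolding n i powq_add[symmetric] using powq_mod[OF R(2)] by metis
      thus "y \<in> range (powq \<psi>)" by (metis rangeI)
    qed
  qed
  thus ?thesis by (simp add: Dq_orbit_range)
qed

lemma orbit_cases:
  fixes \<chi> \<psi> :: "'g::{ab_group_add,finite} \<Rightarrow> 'k::{field,finite} alg_closure"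
  assumes cop: "coprime CARD('g) CHAR('k)" and c: "\<chi> \<in> dual_group" and d: "\<psi> \<in> dual_group"
  shows "Dq_orbit \<chi> = Dq_orbit \<psi> \<or> Dq_orbit \<chi> \<inter> Dq_orbit \<psi> = {}"
proof (cases "Dq_orbit \<chi> \<inter> Dq_orbit \<psi> = {}")
  case False
  then obtain \<phi> where "\<phi> \<in> Dq_orbit \<chi>" "\<phi> \<in> Dq_orbit \<psi>" by auto
  thus ?thesis using orbit_mem[OF cop c] orbit_mem[OF cop d] by metis
qed simp


context
  assumes cop: "coprime CARD('g::{ab_group_add,finite}) CHAR('k::{field,finite})"
begin

lemma Nnz: "(of_nat CARD('g) :: 'k alg_closure) \<noteq> 0"
  using of_nat_ne0_L[OF cop] by simp

lemma NnzK: "(of_nat CARD('g) :: 'k) \<noteq> 0"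
  using of_nat_ne0_K[OF cop] by simp

lemma conv_sum_right: "conv u (\<lambda>x. \<Sum>i\<in>A. f i x) = (\<lambda>x. \<Sum>i\<in>A. conv u (f i) x)"
  for u :: "'g \<Rightarrow> 'f::comm_ring_1"
  by (subst conv_comm) (simp add: conv_sum_left conv_comm[of _ u])

lemma conv_Tr:
  fixes \<chi> \<psi> :: "'g \<Rightarrow> 'k alg_closure"
  assumes c: "\<chi> \<in> dual_group" and d: "\<psi> \<in> dual_group"
  shows "conv \<chi> (Tr \<psi>) = (if \<chi> \<in> Dq_orbit \<psi> then (\<lambda>x. of_nat CARD('g) * \<chi> x) else (\<lambda>_. 0))"
proof -
  have O: "Dq_orbit \<psi> \<subseteq> dual_group" by (rule orbit_dual[OF d])
  have fin: "finite (Dq_orbit \<psi>)" by (rule finite_orbit[OF cop d])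
  have "conv \<chi> (Tr \<psi>) = (\<lambda>x. \<Sum>\<phi>\<in>Dq_orbit \<psi>. conv \<chi> \<phi> x)"
    unfolding Tr_orbit[OF cop d] by (rule conv_sum_right)
  also have "\<dots> = (\<lambda>x. \<Sum>\<phi>\<in>Dq_orbit \<psi>. if \<phi> = \<chi> then of_nat CARD('g) * \<chi> x else 0)"
  proof (rule ext, rule sum.cong[OF refl])
    fix x \<phi> assume "\<phi> \<in> Dq_orbit \<psi>"
    hence "\<phi> \<in> dual_group" using O by auto
    thus "conv \<chi> \<phi> x = (if \<phi> = \<chi> then of_nat CARD('g) * \<chi> x else 0)"
      using conv_chars[OF c, of \<phi>] by auto
  qed
  also have "\<dots> = (if \<chi> \<in> Dq_orbit \<psi> then (\<lambda>x. of_nat CARD('g) * \<chi> x) else (\<lambda>_. 0))"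
    using fin by (auto simp: sum.delta')
  finally show ?thesis .
qed

lemma conv_Tr_Tr:
  fixes \<chi> \<psi> :: "'g \<Rightarrow> 'k alg_closure"
  assumes c: "\<chi> \<in> dual_group" and d: "\<psi> \<in> dual_group"
  shows "conv (Tr \<chi>) (Tr \<psi>) = (if Dq_orbit \<chi> = Dq_orbit \<psi> then (\<lambda>x. of_nat CARD('g) * Tr \<chi> x) else (\<lambda>_. 0))"
proof -
  have O: "Dq_orbit \<chi> \<subseteq> dual_group" by (rule orbit_dual[OF c])
  have "conv (Tr \<chi>) (Tr \<psi>) = (\<lambda>x. \<Sum>\<phi>\<in>Dq_orbit \<chi>. conv \<phi> (Tr \<psi>) x)"
    unfolding Tr_orbit[OF cop c] by (rule conv_sum_left)
  also have "\<dots> = (\<lambda>x. \<Sum>\<phi>\<in>Dq_orbit \<chi>. if \<phi> \<in> Dq_orbit \<psi> then of_nat CARD('g) * \<phi> x else 0)"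
  proof (rule ext, rule sum.cong[OF refl])
    fix x \<phi> assume "\<phi> \<in> Dq_orbit \<chi>"
    hence "\<phi> \<in> dual_group" using O by auto
    thus "conv \<phi> (Tr \<psi>) x = (if \<phi> \<in> Dq_orbit \<psi> then of_nat CARD('g) * \<phi> x else 0)"
      using conv_Tr[OF _ d, of \<phi>] by auto
  qed
  also have "\<dots> = (if Dq_orbit \<chi> = Dq_orbit \<psi> then (\<lambda>x. of_nat CARD('g) * Tr \<chi> x) else (\<lambda>_. 0))"
  proof (cases "Dq_orbit \<chi> = Dq_orbit \<psi>")
    case True
    thus ?thesis by (simp add: Tr_orbit[OF cop c] sum_distrib_left)
  next
    case False
    hence "Dq_orbit \<chi> \<inter> Dq_orbit \<psi> = {}" using orbit_cases[OF cop c d] by blast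
    hence "\<And>\<phi>. \<phi> \<in> Dq_orbit \<chi> \<Longrightarrow> \<phi> \<notin> Dq_orbit \<psi>" by blast
    thus ?thesis using False by simp
  qed
  finally show ?thesis .
qed

lemma part_c:
  fixes \<chi> :: "'g \<Rightarrow> 'k alg_closure"
  assumes c: "\<chi> \<in> dual_group"
  shows "\<chi> = (\<lambda>x. (\<Sum>g\<in>UNIV. \<chi> (- g) * Tr \<chi> (g + x)) / of_nat CARD('g))"
proof
  fix x
  have "(\<Sum>g\<in>UNIV. \<chi> (- g) * Tr \<chi> (g + x)) = conv \<chi> (Tr \<chi>) x"
    unfolding conv_def
    by (rule sum.reindex_bij_witness[of _ "\<lambda>h. - h" "\<lambda>h. - h"]) (auto simp: add.commute)
  also have "\<dots> = of_nat CARD('g) * \<chi> x" using conv_Tr[OF c c] self_orbit[of \<chi>] by simp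
  finally show "\<chi> x = (\<Sum>g\<in>UNIV. \<chi> (- g) * Tr \<chi> (g + x)) / of_nat CARD('g)"
    using Nnz by simp
qed

lemma Tr_in_K:
  fixes \<chi> :: "'g \<Rightarrow> 'k alg_closure"
  assumes c: "\<chi> \<in> dual_group"
  shows "Tr \<chi> x \<in> range to_ac"
proof (rule fixed_in_K)
  note R = rdeg_props[OF cop c]
  let ?r = "rdeg \<chi>" and ?f = "\<lambda>i. powq \<chi> i x"
  have "Tr \<chi> x ^ CARD('k) = (Tr \<chi> x) ^ (CARD('k) ^ 1)" by simp
  also have "\<dots> = (\<Sum>i<?r. (\<chi> x ^ (CARD('k) ^ i)) ^ (CARD('k) ^ 1))"
    unfolding Tr_def by (rule frob_sum)
  also have "\<dots> = (\<Sum>i<?r. ?f (Suc i))"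
    by (simp add: powq_def power_mult[symmetric] mult.commute)
  also have "\<dots> = (\<Sum>i<?r. ?f i)"
  proof -
    have "(\<Sum>i<Suc ?r. ?f i) = ?f 0 + (\<Sum>i<?r. ?f (Suc i))" by (rule sum.lessThan_Suc_shift)
    moreover have "(\<Sum>i<Suc ?r. ?f i) = (\<Sum>i<?r. ?f i) + ?f ?r" by simp
    moreover have "?f ?r = ?f 0" using R(2) by simp
    ultimately show ?thesis by (simp add: add.commute)
  qed
  also have "\<dots> = Tr \<chi> x" by (simp add: Tr_def powq_def)
  finally show "Tr \<chi> x ^ CARD('k) = Tr \<chi> x" .
qed

lemma TrK_lift:
  fixes \<chi> :: "'g \<Rightarrow> 'k alg_closure"
  assumes c: "\<chi> \<in> dual_group"
  shows "(\<lambda>y. to_ac (TrK \<chi> y)) = Tr \<chi>"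
  by (rule ext) (simp add: TrK_def to_ac_of_ac[OF Tr_in_K[OF c]])

lemma Tr_orbit_eq:
  fixes \<chi> \<psi> :: "'g \<Rightarrow> 'k alg_closure"
  assumes c: "\<chi> \<in> dual_group" and p: "\<psi> \<in> Dq_orbit \<chi>"
  shows "Tr \<psi> = Tr \<chi>"
proof -
  have d: "\<psi> \<in> dual_group" using orbit_dual[OF c] p by auto
  show ?thesis using Tr_orbit[OF cop c] Tr_orbit[OF cop d] orbit_mem[OF cop c p] by simp
qed

lemma Tr_inj:
  fixes \<chi> \<psi> :: "'g \<Rightarrow> 'k alg_closure"
  assumes c: "\<chi> \<in> dual_group" and d: "\<psi> \<in> dual_group" and eq: "Tr \<chi> = Tr \<psi>"
  shows "Dq_orbit \<chi> = Dq_orbit \<psi>"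
proof -
  have "conv \<psi> (Tr \<psi>) 0 = of_nat CARD('g) * \<psi> 0" using conv_Tr[OF d d] self_orbit[of \<psi>] by simp
  hence "conv \<psi> (Tr \<chi>) 0 \<noteq> 0" using eq Nnz dual_nz[OF d] by simp
  hence "\<psi> \<in> Dq_orbit \<chi>" using conv_Tr[OF d c] by (auto split: if_splits)
  thus ?thesis using orbit_mem[OF cop c] by simp
qed

end


context
  assumes cop: "coprime CARD('g::{ab_group_add,finite}) CHAR('k::{field,finite})"
begin

lemma H_pow:
  fixes \<chi> :: "'g \<Rightarrow> 'k alg_closure" and a :: "nat \<Rightarrow> 'g \<Rightarrow> 'k"
  assumes h: "\<chi> \<in> harmonic_chars t a"
  shows "powq \<chi> n \<in> harmonic_chars t a"
proof -
  have c: "\<chi> \<in> dual_group" using h by (simp add: harmonic_chars_def)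
  have "conv (powq \<chi> n) (\<lambda>x. to_ac (a j x)) = (\<lambda>_. 0)" if j: "j < t" for j
  proof
    fix x
    let ?Q = "CARD('k) ^ n"
    have "conv (powq \<chi> n) (\<lambda>x. to_ac (a j x)) x = (\<Sum>h\<in>UNIV. (\<chi> h * to_ac (a j (x - h))) ^ ?Q)"
      unfolding conv_def powq_def
      by (rule sum.cong[OF refl]) (simp add: power_mult_distrib power_card_pow_K flip: to_ac_power)
    also have "\<dots> = (conv \<chi> (\<lambda>x. to_ac (a j x)) x) ^ ?Q"
      unfolding conv_def by (rule frob_sum[symmetric])
    also have "\<dots> = 0" using h j by (simp add: harmonic_chars_def harmonic_def)
    finally show "conv (powq \<chi> n) (\<lambda>x. to_ac (a j x)) x = 0" .
  qed
  thus ?thesis using powq_dual[OF c] by (simp add: harmonic_chars_def harmonic_def)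
qed

lemma H_orbit:
  fixes \<chi> :: "'g \<Rightarrow> 'k alg_closure" and a :: "nat \<Rightarrow> 'g \<Rightarrow> 'k"
  assumes h: "\<chi> \<in> harmonic_chars t a"
  shows "Dq_orbit \<chi> \<subseteq> harmonic_chars t a"
  using H_pow[OF h] by (auto simp: Dq_orbit_range)

lemma to_ac_fun_eq: "(\<And>x. to_ac (f x) = to_ac (g x)) \<Longrightarrow> f = g"
  by (rule ext) simp

lemma conv_TrK_a:
  fixes \<chi> :: "'g \<Rightarrow> 'k alg_closure" and a :: "nat \<Rightarrow> 'g \<Rightarrow> 'k"
  assumes h: "\<chi> \<in> harmonic_chars t a" and j: "j < t"
  shows "conv (TrK \<chi>) (a j) = (\<lambda>_. 0)"
proof (rule to_ac_fun_eq)
  fix x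
  have c: "\<chi> \<in> dual_group" using h by (simp add: harmonic_chars_def)
  have "to_ac (conv (TrK \<chi>) (a j) x) = conv (Tr \<chi>) (\<lambda>y. to_ac (a j y)) x"
    by (simp add: conv_to_ac TrK_lift[OF cop c])
  also have "\<dots> = (\<Sum>\<phi>\<in>Dq_orbit \<chi>. conv \<phi> (\<lambda>y. to_ac (a j y)) x)"
    unfolding Tr_orbit[OF cop c] conv_sum_left ..
  also have "\<dots> = 0"
  proof (rule sum.neutral, rule ballI)
    fix \<phi> assume "\<phi> \<in> Dq_orbit \<chi>"
    hence "\<phi> \<in> harmonic_chars t a" using H_orbit[OF h] by auto
    thus "conv \<phi> (\<lambda>y. to_ac (a j y)) x = 0" using j by (simp add: harmonic_chars_def harmonic_def)
  qed
  finally show "to_ac (conv (TrK \<chi>) (a j) x) = to_ac 0" by simp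
qed

lemma conv_zero_right: "conv u (\<lambda>_. 0) = (\<lambda>_. 0)"
  by (simp add: conv_def)

lemma ideal_ker:
  fixes \<chi> :: "'g \<Rightarrow> 'k alg_closure" and a :: "nat \<Rightarrow> 'g \<Rightarrow> 'k"
  assumes h: "\<chi> \<in> harmonic_chars t a"
  shows "conv_ideal (TrK \<chi>) \<subseteq> ker_Delta t a"
proof
  fix f assume "f \<in> conv_ideal (TrK \<chi>)"
  then obtain u where f: "f = conv (TrK \<chi>) u" by (auto simp: conv_ideal_def)
  have "conv f (a j) = (\<lambda>_. 0)" if j: "j < t" for j
  proof -
    have "conv f (a j) = conv (conv u (TrK \<chi>)) (a j)" by (simp add: f conv_comm)
    also have "\<dots> = conv u (conv (TrK \<chi>) (a j))" by (rule conv_assoc)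
    also have "\<dots> = (\<lambda>_. 0)" by (simp add: conv_TrK_a[OF h j] conv_zero_right)
    finally show ?thesis .
  qed
  thus "f \<in> ker_Delta t a" by (simp add: ker_Delta_def)
qed

lemma TrK_conv_TrK:
  fixes \<chi> \<psi> :: "'g \<Rightarrow> 'k alg_closure"
  assumes c: "\<chi> \<in> dual_group" and d: "\<psi> \<in> dual_group"
  shows "conv (TrK \<chi>) (TrK \<psi>) = (if Dq_orbit \<chi> = Dq_orbit \<psi> then (\<lambda>x. of_nat CARD('g) * TrK \<chi> x) else (\<lambda>_. 0))"
proof (rule to_ac_fun_eq)
  fix x
  have "to_ac (conv (TrK \<chi>) (TrK \<psi>) x) = conv (Tr \<chi>) (Tr \<psi>) x"
    by (simp add: conv_to_ac TrK_lift[OF cop c] TrK_lift[OF cop d])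
  also have "\<dots> = to_ac ((if Dq_orbit \<chi> = Dq_orbit \<psi> then (\<lambda>x. of_nat CARD('g) * TrK \<chi> x) else (\<lambda>_. 0)) x)"
    using conv_Tr_Tr[OF cop c d] fun_cong[OF TrK_lift[OF cop c], of x] by simp
  finally show "to_ac (conv (TrK \<chi>) (TrK \<psi>) x) = to_ac ((if Dq_orbit \<chi> = Dq_orbit \<psi> then (\<lambda>x. of_nat CARD('g) * TrK \<chi> x) else (\<lambda>_. 0)) x)" .
qed

lemma nonharm_zero:
  fixes \<chi> :: "'g \<Rightarrow> 'k alg_closure" and a :: "nat \<Rightarrow> 'g \<Rightarrow> 'k"
  assumes c: "\<chi> \<in> dual_group" and nh: "\<chi> \<notin> harmonic_chars t a" and f: "f \<in> ker_Delta t a"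
  shows "conv (\<lambda>y. to_ac (f y)) \<chi> = (\<lambda>_. 0)"
proof -
  obtain j where j: "j < t" and nz: "conv \<chi> (\<lambda>x. to_ac (a j x)) \<noteq> (\<lambda>_. 0)"
    using nh c by (auto simp: harmonic_chars_def harmonic_def)
  let ?A = "\<lambda>x. to_ac (a j x)" and ?F = "\<lambda>y. to_ac (f y)"
  define cc where "cc = (\<Sum>h\<in>UNIV. ?A h * \<chi> (-h))"
  have cA: "conv ?A \<chi> = (\<lambda>x. cc * \<chi> x)" unfolding cc_def by (rule conv_char[OF c])
  have cc0: "cc \<noteq> 0" using nz cA conv_comm[of \<chi> ?A] by auto
  have FA: "conv ?F ?A = (\<lambda>_. 0)"
  proof (rule ext)
    fix x
    have "conv f (a j) = (\<lambda>_. 0)" using f j by (simp add: ker_Delta_def)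
    hence "to_ac (conv f (a j) x) = 0" by simp
    thus "conv ?F ?A x = 0" by (simp add: conv_to_ac)
  qed
  have "(\<lambda>_. 0) = conv (conv ?F ?A) \<chi>" by (simp add: FA conv_zero_left)
  also have "\<dots> = conv ?F (\<lambda>x. cc * \<chi> x)" by (simp add: conv_assoc cA)
  also have "\<dots> = (\<lambda>x. cc * conv \<chi> ?F x)" by (simp add: conv_comm[of ?F] conv_smult_left)
  finally have "\<And>x. cc * conv \<chi> ?F x = 0" by metis
  hence "conv \<chi> ?F = (\<lambda>_. 0)" using cc0 by auto
  thus ?thesis by (simp add: conv_comm)
qed

end


context
  assumes cop: "coprime CARD('g::{ab_group_add,finite}) CHAR('k::{field,finite})"
begin

lemma part_a:
  fixes t :: nat and a :: "nat \<Rightarrow> 'g \<Rightarrow> 'k"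
  defines "H \<equiv> harmonic_chars t a"
  shows "(\<forall>\<chi>\<in>H. Tr \<chi> ` UNIV \<subseteq> range to_ac) \<and>
      (\<exists>\<phi>. bij_betw \<phi> (Dq_orbit ` H) (Tr ` H) \<and> (\<forall>\<chi>\<in>H. \<phi> (Dq_orbit \<chi>) = Tr \<chi>))"
proof
  have HD: "\<chi> \<in> dual_group" if "\<chi> \<in> H" for \<chi> using that by (simp add: H_def harmonic_chars_def)
  show "\<forall>\<chi>\<in>H. Tr \<chi> ` UNIV \<subseteq> range to_ac" using Tr_in_K[OF cop HD] by blast
  define \<phi> :: "('g \<Rightarrow> 'k alg_closure) set \<Rightarrow> 'g \<Rightarrow> 'k alg_closure" where "\<phi> = (\<lambda>S. Tr (SOME \<psi>. \<psi> \<in> S))"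
  have phi: "\<phi> (Dq_orbit \<chi>) = Tr \<chi>" if "\<chi> \<in> H" for \<chi>
  proof -
    have "(SOME \<psi>. \<psi> \<in> Dq_orbit \<chi>) \<in> Dq_orbit \<chi>" by (rule someI[of _ \<chi>], rule self_orbit)
    thus ?thesis unfolding \<phi>_def using Tr_orbit_eq[OF cop HD[OF that]] by blast
  qed
  have "bij_betw \<phi> (Dq_orbit ` H) (Tr ` H)"
  proof (rule bij_betw_imageI)
    show "inj_on \<phi> (Dq_orbit ` H)"
    proof (rule inj_onI)
      fix O1 O2 assume "O1 \<in> Dq_orbit ` H" "O2 \<in> Dq_orbit ` H" "\<phi> O1 = \<phi> O2"
      then obtain \<chi> \<psi> where "\<chi> \<in> H" "\<psi> \<in> H" "O1 = Dq_orbit \<chi>" "O2 = Dq_orbit \<psi>" "Tr \<chi> = Tr \<psi>"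
        using phi by auto
      thus "O1 = O2" using Tr_inj[OF cop HD HD] by blast
    qed
    show "\<phi> ` Dq_orbit ` H = Tr ` H" using phi by (force simp: image_image)
  qed
  thus "\<exists>\<phi>. bij_betw \<phi> (Dq_orbit ` H) (Tr ` H) \<and> (\<forall>\<chi>\<in>H. \<phi> (Dq_orbit \<chi>) = Tr \<chi>)"
    using phi by blast
qed

lemma part_b:
  fixes t :: nat and a :: "nat \<Rightarrow> 'g \<Rightarrow> 'k" and reps :: "nat \<Rightarrow> 'g \<Rightarrow> 'k alg_closure"
  defines "H \<equiv> harmonic_chars t a"
  assumes R1: "\<forall>i<m. reps i \<in> H" and R2: "Dq_orbit ` reps ` {..<m} = Dq_orbit ` H"
    and R3: "\<forall>i<m. \<forall>j<m. i \<noteq> j \<longrightarrow> Dq_orbit (reps i) \<noteq> Dq_orbit (reps j)"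
  shows "ker_Delta t a = {(\<lambda>x. \<Sum>i<m. f i x) | f. \<forall>i<m. f i \<in> conv_ideal (TrK (reps i))}
      \<and> (\<forall>f. (\<forall>i<m. f i \<in> conv_ideal (TrK (reps i))) \<and> (\<lambda>x. \<Sum>i<m. f i x) = (\<lambda>_. 0)
              \<longrightarrow> (\<forall>i<m. f i = (\<lambda>_. 0)))
      \<and> (\<forall>i<m. \<forall>j<m. i \<noteq> j \<longrightarrow>
           (\<forall>f1\<in>conv_ideal (TrK (reps i)). \<forall>f2\<in>conv_ideal (TrK (reps j)). ip1 f1 f2 = 0))"
proof (intro conjI)
  have HD: "\<chi> \<in> dual_group" if "\<chi> \<in> H" for \<chi> using that by (simp add: H_def harmonic_chars_def)
  have RD: "reps i \<in> dual_group" if "i < m" for i using R1 that HD by blast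
  let ?T = "\<lambda>i. TrK (reps i)"
  let ?N = "CARD('g)"
  have TT: "conv (?T i) (?T j) = (if i = j then (\<lambda>x. of_nat ?N * ?T i x) else (\<lambda>_. 0))"
    if "i < m" "j < m" for i j
    using TrK_conv_TrK[OF cop RD[OF that(1)] RD[OF that(2)]] R3 that by auto
  show "ker_Delta t a = {(\<lambda>x. \<Sum>i<m. f i x) | f. \<forall>i<m. f i \<in> conv_ideal (TrK (reps i))}"
  proof
    show "{(\<lambda>x. \<Sum>i<m. f i x) | f. \<forall>i<m. f i \<in> conv_ideal (TrK (reps i))} \<subseteq> ker_Delta t a"
    proof clarify
      fix f assume f: "\<forall>i<m. f i \<in> conv_ideal (TrK (reps i))"
      have fk: "f i \<in> ker_Delta t a" if "i < m" for i
        using ideal_ker[OF cop, of "reps i" t a] R1 f that unfolding H_def by blast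
      have "conv (\<lambda>x. \<Sum>i<m. f i x) (a j) = (\<lambda>_. 0)" if "j < t" for j
        unfolding conv_sum_left using fk that by (simp add: ker_Delta_def)
      thus "(\<lambda>x. \<Sum>i<m. f i x) \<in> ker_Delta t a" by (simp add: ker_Delta_def)
    qed
  next
    show "ker_Delta t a \<subseteq> {(\<lambda>x. \<Sum>i<m. f i x) | f. \<forall>i<m. f i \<in> conv_ideal (TrK (reps i))}"
    proof
      fix f assume fk: "f \<in> ker_Delta t a"
      let ?F = "\<lambda>y. to_ac (f y)"
      define g where "g = (\<lambda>i. conv (?T i) (\<lambda>y. f y / of_nat ?N))"
      have gi: "\<forall>i<m. g i \<in> conv_ideal (?T i)" by (auto simp: g_def conv_ideal_def)
      have Hun: "H = (\<Union>i\<in>{..<m}. Dq_orbit (reps i))"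
      proof -
        have "\<Union>(Dq_orbit ` H) = H"
        proof
          show "\<Union> (Dq_orbit ` H) \<subseteq> H" using H_orbit[OF cop] unfolding H_def by blast
          show "H \<subseteq> \<Union> (Dq_orbit ` H)" using self_orbit by blast
        qed
        moreover have "\<Union>(Dq_orbit ` reps ` {..<m}) = (\<Union>i\<in>{..<m}. Dq_orbit (reps i))" by auto
        ultimately show ?thesis using R2 by simp
      qed
      have HsubD: "H \<subseteq> dual_group" using HD by blast
      have key: "of_nat ?N * ?F x = (\<Sum>i<m. conv ?F (Tr (reps i)) x)" for x
      proof -
        have "of_nat ?N * ?F x = (\<Sum>\<chi>\<in>(dual_group :: ('g \<Rightarrow> 'k alg_closure) set). conv ?F \<chi> x)"
          by (rule fourier[OF cop])
        also have "\<dots> = (\<Sum>\<chi>\<in>H. conv ?F \<chi> x)"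
        proof (rule sum.mono_neutral_right[OF finite_dual HsubD], rule ballI)
          fix \<chi> assume "\<chi> \<in> dual_group - H"
          thus "conv ?F \<chi> x = 0" using nonharm_zero[OF cop _ _ fk, of \<chi>] unfolding H_def by auto
        qed
        also have "\<dots> = (\<Sum>i<m. \<Sum>\<chi>\<in>Dq_orbit (reps i). conv ?F \<chi> x)"
          unfolding Hun
        proof (rule sum.UNION_disjoint)
          show "\<forall>i\<in>{..<m}. finite (Dq_orbit (reps i))" using finite_orbit[OF cop RD] by blast
          show "\<forall>i\<in>{..<m}. \<forall>j\<in>{..<m}. i \<noteq> j \<longrightarrow> Dq_orbit (reps i) \<inter> Dq_orbit (reps j) = {}"
            using R3 orbit_cases[OF cop RD RD] by blast
        qed simp
        also have "\<dots> = (\<Sum>i<m. conv ?F (Tr (reps i)) x)"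
        proof (rule sum.cong[OF refl])
          fix i assume "i \<in> {..<m}"
          hence "Tr (reps i) = (\<lambda>x. \<Sum>\<phi>\<in>Dq_orbit (reps i). \<phi> x)" using Tr_orbit[OF cop RD] by blast
          thus "(\<Sum>\<chi>\<in>Dq_orbit (reps i). conv ?F \<chi> x) = conv ?F (Tr (reps i)) x"
            by (simp add: conv_sum_right[OF cop])
        qed
        finally show ?thesis .
      qed
      have "f = (\<lambda>x. \<Sum>i<m. g i x)"
      proof (rule to_ac_fun_eq[OF cop])
        fix x
        have "to_ac (\<Sum>i<m. g i x) = (\<Sum>i<m. conv (Tr (reps i)) (\<lambda>y. inverse (of_nat ?N) * ?F y) x)"
          unfolding g_def to_ac_sum
        proof (rule sum.cong[OF refl])
          fix i assume "i \<in> {..<m}"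
          hence "(\<lambda>y. to_ac (TrK (reps i) y)) = Tr (reps i)" using TrK_lift[OF cop RD] by blast
          thus "to_ac (conv (TrK (reps i)) (\<lambda>y. f y / of_nat ?N) x)
              = conv (Tr (reps i)) (\<lambda>y. inverse (of_nat ?N) * ?F y) x"
            by (simp add: conv_to_ac field_simps)
        qed
        also have "\<dots> = inverse (of_nat ?N) * (\<Sum>i<m. conv ?F (Tr (reps i)) x)"
          by (simp add: conv_comm[of "Tr _"] conv_smult_left sum_distrib_left)
        also have "\<dots> = ?F x" using key[of x] Nnz[OF cop] by (simp add: field_simps)
        finally show "to_ac (f x) = to_ac (\<Sum>i<m. g i x)" by simp
      qed
      thus "f \<in> {(\<lambda>x. \<Sum>i<m. f i x) | f. \<forall>i<m. f i \<in> conv_ideal (TrK (reps i))}" using gi by blast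
    qed
  qed
  show "\<forall>f. (\<forall>i<m. f i \<in> conv_ideal (TrK (reps i))) \<and> (\<lambda>x. \<Sum>i<m. f i x) = (\<lambda>_. 0)
              \<longrightarrow> (\<forall>i<m. f i = (\<lambda>_. 0))"
  proof (rule allI, rule impI, elim conjE)
    fix f assume fi: "\<forall>i<m. f i \<in> conv_ideal (TrK (reps i))" and s0: "(\<lambda>x. \<Sum>i<m. f i x) = (\<lambda>_. 0)"
    have "\<forall>i\<in>{..<m}. \<exists>u. f i = conv (?T i) u" using fi by (auto simp: conv_ideal_def)
    then obtain U where U: "\<forall>i\<in>{..<m}. f i = conv (?T i) (U i)" by (metis bchoice)
    show "\<forall>i<m. f i = (\<lambda>_. 0)"
    proof (intro allI impI)
      fix i assume i: "i < m"
      have "(\<lambda>_. 0) = conv (?T i) (\<lambda>x. \<Sum>j<m. f j x)" by (simp add: s0 conv_zero_right[OF cop])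
      also have "\<dots> = (\<lambda>x. \<Sum>j<m. conv (?T i) (f j) x)" by (rule conv_sum_right[OF cop])
      also have "\<dots> = (\<lambda>x. \<Sum>j<m. if j = i then of_nat ?N * f i x else 0)"
      proof (rule ext, rule sum.cong[OF refl])
        fix x j assume j: "j \<in> {..<m}"
        have "conv (?T i) (f j) = conv (conv (?T i) (?T j)) (U j)" using U j by (simp add: conv_assoc)
        also have "\<dots> = (if j = i then (\<lambda>x. of_nat ?N * f i x) else (\<lambda>_. 0))"
          using TT[OF i, of j] j U i by (auto simp: conv_smult_left conv_zero_left)
        finally show "conv (?T i) (f j) x = (if j = i then of_nat ?N * f i x else 0)" by simp
      qed
      also have "\<dots> = (\<lambda>x. of_nat ?N * f i x)" using i by (simp add: sum.delta)
      finally show "f i = (\<lambda>_. 0)" using NnzK[OF cop] by (metis mult_eq_0_iff)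
    qed
  qed
  show "\<forall>i<m. \<forall>j<m. i \<noteq> j \<longrightarrow>
           (\<forall>f1\<in>conv_ideal (TrK (reps i)). \<forall>f2\<in>conv_ideal (TrK (reps j)). ip1 f1 f2 = 0)"
  proof (intro allI impI ballI)
    fix i j f1 f2 assume ij: "i < m" "j < m" "i \<noteq> j"
      and f1: "f1 \<in> conv_ideal (TrK (reps i))" and f2: "f2 \<in> conv_ideal (TrK (reps j))"
    obtain u v where u: "f1 = conv (?T i) u" and v: "f2 = conv (?T j) v"
      using f1 f2 by (auto simp: conv_ideal_def)
    have "conv f1 f2 = conv (?T i) (conv u (conv (?T j) v))" by (simp add: u v conv_assoc)
    also have "conv u (conv (?T j) v) = conv (?T j) (conv u v)"
      by (metis conv_assoc conv_comm)
    also have "conv (?T i) (conv (?T j) (conv u v)) = conv (conv (?T i) (?T j)) (conv u v)"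
      by (simp add: conv_assoc)
    also have "\<dots> = (\<lambda>_. 0)" using TT[OF ij(1,2)] ij(3) by (simp add: conv_zero_left)
    finally have "conv f1 f2 0 = 0" by simp
    thus "ip1 f1 f2 = 0" by (simp add: ip1_def conv_def)
  qed
qed

end

theorem proposition4p3:
  fixes t :: nat and a :: "nat \<Rightarrow> 'g::{ab_group_add,finite} \<Rightarrow> 'k::{field,finite}"
  assumes coprime: "coprime CARD('g) CHAR('k)"
  defines "H \<equiv> harmonic_chars t a"
  shows
    "((\<forall>\<chi>\<in>H. Tr \<chi> ` UNIV \<subseteq> range to_ac) \<and>
      (\<exists>\<phi>. bij_betw \<phi> (Dq_orbit ` H) (Tr ` H) \<and> (\<forall>\<chi>\<in>H. \<phi> (Dq_orbit \<chi>) = Tr \<chi>)))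
   \<and> (\<forall>(m::nat) reps. (\<forall>i<m. reps i \<in> H) \<and>
        Dq_orbit ` reps ` {..<m} = Dq_orbit ` H \<and>
        (\<forall>i<m. \<forall>j<m. i \<noteq> j \<longrightarrow> Dq_orbit (reps i) \<noteq> Dq_orbit (reps j)) \<longrightarrow>
        ker_Delta t a = {(\<lambda>x. \<Sum>i<m. f i x) | f. \<forall>i<m. f i \<in> conv_ideal (TrK (reps i))}
      \<and> (\<forall>f. (\<forall>i<m. f i \<in> conv_ideal (TrK (reps i))) \<and> (\<lambda>x. \<Sum>i<m. f i x) = (\<lambda>_. 0)
              \<longrightarrow> (\<forall>i<m. f i = (\<lambda>_. 0)))
      \<and> (\<forall>i<m. \<forall>j<m. i \<noteq> j \<longrightarrow>
           (\<forall>f1\<in>conv_ideal (TrK (reps i)). \<forall>f2\<in>conv_ideal (TrK (reps j)). ip1 f1 f2 = 0)))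
   \<and> (\<forall>\<chi>::'g \<Rightarrow> 'k alg_closure. \<chi> \<in> dual_group \<longrightarrow>
        \<chi> = (\<lambda>x. (\<Sum>g\<in>UNIV. \<chi> (- g) * Tr \<chi> (g + x)) / of_nat CARD('g)))"
proof -
  have A: "(\<forall>\<chi>\<in>H. Tr \<chi> ` UNIV \<subseteq> range to_ac) \<and>
      (\<exists>\<phi>. bij_betw \<phi> (Dq_orbit ` H) (Tr ` H) \<and> (\<forall>\<chi>\<in>H. \<phi> (Dq_orbit \<chi>) = Tr \<chi>))"
    unfolding H_def by (rule part_a[OF coprime])
  have B: "\<forall>(m::nat) reps. (\<forall>i<m. reps i \<in> H) \<and>
        Dq_orbit ` reps ` {..<m} = Dq_orbit ` H \<and>
        (\<forall>i<m. \<forall>j<m. i \<noteq> j \<longrightarrow> Dq_orbit (reps i) \<noteq> Dq_orbit (reps j)) \<longrightarrow>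
        ker_Delta t a = {(\<lambda>x. \<Sum>i<m. f i x) | f. \<forall>i<m. f i \<in> conv_ideal (TrK (reps i))}
      \<and> (\<forall>f. (\<forall>i<m. f i \<in> conv_ideal (TrK (reps i))) \<and> (\<lambda>x. \<Sum>i<m. f i x) = (\<lambda>_. 0)
              \<longrightarrow> (\<forall>i<m. f i = (\<lambda>_. 0)))
      \<and> (\<forall>i<m. \<forall>j<m. i \<noteq> j \<longrightarrow>
           (\<forall>f1\<in>conv_ideal (TrK (reps i)). \<forall>f2\<in>conv_ideal (TrK (reps j)). ip1 f1 f2 = 0))"
  proof (rule allI, rule allI, rule impI)
    fix m :: nat and reps :: "nat \<Rightarrow> 'g \<Rightarrow> 'k alg_closure"
    assume "(\<forall>i<m. reps i \<in> H) \<and> Dq_orbit ` reps ` {..<m} = Dq_orbit ` H \<and>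
        (\<forall>i<m. \<forall>j<m. i \<noteq> j \<longrightarrow> Dq_orbit (reps i) \<noteq> Dq_orbit (reps j))"
    note A = this[unfolded H_def]
    show "ker_Delta t a = {(\<lambda>x. \<Sum>i<m. f i x) | f. \<forall>i<m. f i \<in> conv_ideal (TrK (reps i))}
      \<and> (\<forall>f. (\<forall>i<m. f i \<in> conv_ideal (TrK (reps i))) \<and> (\<lambda>x. \<Sum>i<m. f i x) = (\<lambda>_. 0)
              \<longrightarrow> (\<forall>i<m. f i = (\<lambda>_. 0)))
      \<and> (\<forall>i<m. \<forall>j<m. i \<noteq> j \<longrightarrow>
           (\<forall>f1\<in>conv_ideal (TrK (reps i)). \<forall>f2\<in>conv_ideal (TrK (reps j)). ip1 f1 f2 = 0))"
      by (rule part_b[OF coprime A[THEN conjunct1] A[THEN conjunct2, THEN conjunct1] A[THEN conjunct2, THEN conjunct2]])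
  qed
  have C: "\<forall>\<chi>::'g \<Rightarrow> 'k alg_closure. \<chi> \<in> dual_group \<longrightarrow>
        \<chi> = (\<lambda>x. (\<Sum>g\<in>UNIV. \<chi> (- g) * Tr \<chi> (g + x)) / of_nat CARD('g))"
    using part_c[OF coprime] by blast
  show ?thesis by (rule conjI[OF A conjI[OF B C]])
qed

end
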